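(* For $m\ge2$ let $q_m(i)=\frac{m}{2h_{m-1}}\frac{1}{i(m-i)}$ ($1\le i\le m-1$), $h_{m-1}=\sum_{j=1}^{m-1}1/j$. For $n\ge2$ let $L_n\sim q_n$ and $I_n=\max\{L_n,n-L_n\}$. Let $(X_n)$ satisfy $X_n\overset d= X_{I_n}+X'_{n-I_n}+b_n$ with $(X_j)$, $(X'_j)$ (where $X'_j\overset d=X_j$) and $(I_n,b_n)$ independent, and suppose there are constants $\mu,\sigma,\epsilon,C>0$ with $|\mathbb E X_n-\mu n|\le Cn^{1/2-\epsilon}$, $|\mathrm{Var}X_n-\sigma^2n|\le Cn^{1-\epsilon}$, $\mathbb E|b_n|^3\le n^{3/2-\epsilon}$. Set $Z_n=\frac{X_n-\mathbb E X_n}{\sigma\sqrt n}$, $\tau_n=\sqrt{\mathrm{Var}[Z_n]}$, $\mu_n=\mathbb E X_n$, $b^{(n)}=\frac{1}{\sigma\sqrt n}(b_n+\mu_{I_n}+\mu_{n-I_n}-\mu_n)$, and with $N_1,N_2$ standard Gaussians independent of everything, \[Z_n^*=\sqrt{\tfrac{I_n}{n}}\tau_{I_n}N_1+\sqrt{\tfrac{n-I_n}{n}}\tau_{n-I_n}N_2+b^{(n)}.\] Let $d_n=\zeta_3(Z_n,\tau_nN_1)$. Then \[d_n\le\mathbb E\left[\left(\frac{n-I_n}{n}\right)^{3/2}d_{n-I_n}+\left(\frac{I_n}{n}\right)^{3/2}d_{I_n}\right]+\zeta_3(Z_n^*,\tau_nN_1).\]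
   Context: $\zeta_3$ is the Zolotarev metric: $\zeta_3(X,Y)=\sup_{f\in\mathcal F_3}|\mathbb E[f(X)-f(Y)]|$, where $\mathcal F_3=\{f\in C^2(\mathbb R,\mathbb R):|f''(x)-f''(y)|\le|x-y|\ \forall x,y\}$ (it depends only on the laws of $X$ and $Y$). *)

theory Defs
  imports "HOL-Probability.Probability"
begin

definition F3 :: "(real \<Rightarrow> real) set" where
  "F3 = {f. \<exists>f1 f2. (\<forall>x. (f has_real_derivative f1 x) (at x)) \<and>
                    (\<forall>x. (f1 has_real_derivative f2 x) (at x)) \<and>
                    (\<forall>x y. \<bar>f2 x - f2 y\<bar> \<le> \<bar>x - y\<bar>)}"

definition zeta3 :: "real measure \<Rightarrow> real measure \<Rightarrow> ennreal" where
  "zeta3 \<mu> \<nu> = (SUP f\<in>F3. ennreal \<bar>(\<integral>x. f x \<partial>\<mu>) - (\<integral>x. f x \<partial>\<nu>)\<bar>)"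

definition q :: "nat \<Rightarrow> nat \<Rightarrow> real" where
  "q m i = real m / (2 * harm (m - 1)) * (1 / (real i * (real m - real i)))"

definition mean :: "'a measure \<Rightarrow> ('a \<Rightarrow> real) \<Rightarrow> real" where
  "mean M Y = (\<integral>\<omega>. Y \<omega> \<partial>M)"

definition var :: "'a measure \<Rightarrow> ('a \<Rightarrow> real) \<Rightarrow> real" where
  "var M Y = (\<integral>\<omega>. (Y \<omega> - mean M Y)\<^sup>2 \<partial>M)"

definition gen_sets :: "'a measure \<Rightarrow> ('a \<Rightarrow> 'b) \<Rightarrow> 'b measure \<Rightarrow> 'a set set" where
  "gen_sets M Y N = {Y -` A \<inter> space M | A. A \<in> sets N}"

datatype comp = CX | CX' | CIb | CN1 | CN2

end

theory Submission
  imports Defs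
begin



lemma mvt_bound:
  fixes g g' :: "real \<Rightarrow> real"
  assumes d: "\<And>t. (g has_real_derivative g' t) (at t)"
    and b: "\<And>t. \<bar>t\<bar> \<le> \<bar>x\<bar> \<Longrightarrow> \<bar>g' t\<bar> \<le> B"
  shows "\<bar>g x - g 0\<bar> \<le> B * \<bar>x\<bar>"
proof (cases "x = 0")
  case True then show ?thesis using b[of 0] by simp
next
  case False
  show ?thesis
  proof (cases "x > 0")
    case True
    from MVT2[OF True, of g g'] d obtain z where z: "0 < z" "z < x" "g x - g 0 = (x - 0) * g' z" by blast
    have "\<bar>g' z\<bar> \<le> B" using b z by auto
    then show ?thesis using z True by (simp add: abs_mult mult.commute mult_left_mono)
  next
    case False
    with \<open>x \<noteq> 0\<close> have x: "x < 0" by simp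
    from MVT2[OF x, of g g'] d obtain z where z: "x < z" "z < 0" "g 0 - g x = (0 - x) * g' z" by blast
    have "\<bar>g' z\<bar> \<le> B" using b z by auto
    then have "\<bar>g 0 - g x\<bar> \<le> (0 - x) * B" using z x by (simp add: abs_mult mult_left_mono)
    then show ?thesis using x by (simp add: abs_minus_commute mult.commute)
  qed
qed

lemma F3_cont: "f \<in> F3 \<Longrightarrow> continuous_on UNIV f"
proof -
  assume "f \<in> F3"
  then obtain f1 where "\<And>x. (f has_real_derivative f1 x) (at x)" unfolding F3_def by blast
  then show ?thesis using DERIV_isCont by (intro continuous_at_imp_continuous_on) blast
qed

lemma F3_meas: "f \<in> F3 \<Longrightarrow> f \<in> borel_measurable borel"
  by (rule borel_measurable_continuous_onI[OF F3_cont])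

lemma cube_bounds:
  fixes x :: real
  shows "\<bar>x\<bar> \<le> 1 + \<bar>x\<bar>^3" "x^2 \<le> 1 + \<bar>x\<bar>^3"
proof -
  have "\<bar>x\<bar> \<le> 1 + \<bar>x\<bar>^3 \<and> x^2 \<le> 1 + \<bar>x\<bar>^3"
  proof (cases "\<bar>x\<bar> \<le> 1")
    case True
    then have "\<bar>x\<bar>^2 \<le> 1" by (intro power_le_one) auto
    then have "x^2 \<le> 1" by (simp only: power2_abs)
    moreover have "0 \<le> \<bar>x\<bar>^3" by simp
    ultimately show ?thesis using True by linarith
  next
    case False
    then have "\<bar>x\<bar> \<le> \<bar>x\<bar>^3" by (simp add: power_increasing[of 1 3 "\<bar>x\<bar>", simplified])
    moreover have "x^2 = \<bar>x\<bar>^2" by simp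
    moreover have "\<bar>x\<bar>^2 \<le> \<bar>x\<bar>^3" using False by (intro power_increasing) auto
    ultimately show ?thesis by linarith
  qed
  then show "\<bar>x\<bar> \<le> 1 + \<bar>x\<bar>^3" "x^2 \<le> 1 + \<bar>x\<bar>^3" by auto
qed

lemma F3_growth:
  assumes "f \<in> F3"
  shows "\<exists>K. \<forall>x. \<bar>f x\<bar> \<le> K * (1 + \<bar>x\<bar>^3)"
proof -
  from assms obtain f1 f2 where d1: "\<And>x. (f has_real_derivative f1 x) (at x)"
    and d2: "\<And>x. (f1 has_real_derivative f2 x) (at x)"
    and L: "\<And>x y. \<bar>f2 x - f2 y\<bar> \<le> \<bar>x - y\<bar>" unfolding F3_def by blast
  have b2: "\<bar>f2 t\<bar> \<le> \<bar>f2 0\<bar> + \<bar>t\<bar>" for t using L[of t 0] by linarith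
  have b1: "\<bar>f1 t\<bar> \<le> \<bar>f1 0\<bar> + (\<bar>f2 0\<bar> + \<bar>t\<bar>) * \<bar>t\<bar>" for t
  proof -
    have "\<bar>f1 t - f1 0\<bar> \<le> (\<bar>f2 0\<bar> + \<bar>t\<bar>) * \<bar>t\<bar>"
      by (rule mvt_bound[OF d2]) (meson b2 add_left_mono order_trans)
    then show ?thesis by linarith
  qed
  have b0: "\<bar>f x\<bar> \<le> \<bar>f 0\<bar> + (\<bar>f1 0\<bar> + (\<bar>f2 0\<bar> + \<bar>x\<bar>) * \<bar>x\<bar>) * \<bar>x\<bar>" for x
  proof -
    have "\<bar>f x - f 0\<bar> \<le> (\<bar>f1 0\<bar> + (\<bar>f2 0\<bar> + \<bar>x\<bar>) * \<bar>x\<bar>) * \<bar>x\<bar>"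
    proof (rule mvt_bound[OF d1])
      fix t :: real assume t: "\<bar>t\<bar> \<le> \<bar>x\<bar>"
      have "(\<bar>f2 0\<bar> + \<bar>t\<bar>) * \<bar>t\<bar> \<le> (\<bar>f2 0\<bar> + \<bar>x\<bar>) * \<bar>x\<bar>"
        using t by (intro mult_mono) auto
      then show "\<bar>f1 t\<bar> \<le> \<bar>f1 0\<bar> + (\<bar>f2 0\<bar> + \<bar>x\<bar>) * \<bar>x\<bar>" using b1[of t] by linarith
    qed
    then show ?thesis by linarith
  qed
  define K where "K = \<bar>f 0\<bar> + \<bar>f1 0\<bar> + \<bar>f2 0\<bar> + 1"
  have "\<bar>f x\<bar> \<le> K * (1 + \<bar>x\<bar>^3)" for x
  proof -
    have e: "(\<bar>f1 0\<bar> + (\<bar>f2 0\<bar> + \<bar>x\<bar>) * \<bar>x\<bar>) * \<bar>x\<bar> = \<bar>f1 0\<bar> * \<bar>x\<bar> + \<bar>f2 0\<bar> * x^2 + \<bar>x\<bar>^3"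
      by (simp add: algebra_simps power2_eq_square power3_eq_cube)
    have "\<bar>f x\<bar> \<le> \<bar>f 0\<bar> + \<bar>f1 0\<bar> * \<bar>x\<bar> + \<bar>f2 0\<bar> * x^2 + \<bar>x\<bar>^3"
      using b0[of x] unfolding e by linarith
    also have "\<dots> \<le> \<bar>f 0\<bar> * (1 + \<bar>x\<bar>^3) + \<bar>f1 0\<bar> * (1 + \<bar>x\<bar>^3) + \<bar>f2 0\<bar> * (1 + \<bar>x\<bar>^3) + 1 * (1 + \<bar>x\<bar>^3)"
      by (intro add_mono mult_left_mono cube_bounds) (auto simp: mult_le_cancel_left1)
    also have "\<dots> = K * (1 + \<bar>x\<bar>^3)" by (simp add: K_def algebra_simps)
    finally show ?thesis .
  qed
  then show ?thesis by blast
qed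

lemma F3_scale:
  assumes "f \<in> F3" "a > 0"
  shows "(\<lambda>x. f (a * x + c) / a^3) \<in> F3"
proof -
  from assms obtain f1 f2 where d1: "\<And>x. (f has_real_derivative f1 x) (at x)"
    and d2: "\<And>x. (f1 has_real_derivative f2 x) (at x)"
    and L: "\<And>x y. \<bar>f2 x - f2 y\<bar> \<le> \<bar>x - y\<bar>" unfolding F3_def by blast
  have lin: "((\<lambda>x. a * x + c) has_real_derivative a) (at x)" for x
    by (auto intro!: derivative_eq_intros)
  have D1: "((\<lambda>x. f (a * x + c) / a^3) has_real_derivative f1 (a * x + c) / a^2) (at x)" for x
  proof -
    have e: "f1 (a * x + c) * a / a^3 = f1 (a * x + c) / a^2"
      using assms(2) by (simp add: power2_eq_square power3_eq_cube)
    show ?thesis using DERIV_cdivide[OF DERIV_chain2[OF d1 lin[of x]], of "a^3"] unfolding e .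
  qed
  have D2: "((\<lambda>x. f1 (a * x + c) / a^2) has_real_derivative f2 (a * x + c) / a) (at x)" for x
  proof -
    have e: "f2 (a * x + c) * a / a^2 = f2 (a * x + c) / a"
      using assms(2) by (simp add: power2_eq_square)
    show ?thesis using DERIV_cdivide[OF DERIV_chain2[OF d2 lin[of x]], of "a^2"] unfolding e .
  qed
  have L2: "\<bar>f2 (a * x + c) / a - f2 (a * y + c) / a\<bar> \<le> \<bar>x - y\<bar>" for x y
  proof -
    have e: "a * x + c - (a * y + c) = a * (x - y)" by (simp add: algebra_simps)
    have "\<bar>f2 (a * x + c) - f2 (a * y + c)\<bar> \<le> a * \<bar>x - y\<bar>"
      using L[of "a*x+c" "a*y+c"] assms(2) unfolding e by (simp add: abs_mult)
    moreover have "\<bar>f2 (a * x + c) / a - f2 (a * y + c) / a\<bar> = \<bar>f2 (a * x + c) - f2 (a * y + c)\<bar> / a"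
      using assms(2) by (simp only: diff_divide_distrib[symmetric] abs_divide)
    ultimately show ?thesis using assms(2) by (metis pos_divide_le_eq mult.commute)
  qed
  show ?thesis unfolding F3_def mem_Collect_eq
    by (intro exI[of _ "\<lambda>x. f1 (a * x + c) / a^2"] exI[of _ "\<lambda>x. f2 (a * x + c) / a"] conjI allI D1 D2 L2)
qed




lemma cube_add: "\<bar>(a::real) + b\<bar>^3 \<le> 4 * (\<bar>a\<bar>^3 + \<bar>b\<bar>^3)"
proof -
  define u where "u = \<bar>a\<bar>" define v where "v = \<bar>b\<bar>"
  have uv: "u \<ge> 0" "v \<ge> 0" unfolding u_def v_def by auto
  have "\<bar>a + b\<bar>^3 \<le> (u + v)^3" unfolding u_def v_def by (intro power_mono abs_triangle_ineq) auto
  also have "(u + v)^3 = 4 * (u^3 + v^3) - 3 * (u + v) * (u - v)^2"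
    by (simp add: algebra_simps power2_eq_square power3_eq_cube)
  also have "\<dots> \<le> 4 * (u^3 + v^3)" using uv by simp
  finally show ?thesis unfolding u_def v_def .
qed

definition L3 :: "'a measure \<Rightarrow> ('a \<Rightarrow> real) \<Rightarrow> bool" where
  "L3 M Y \<longleftrightarrow> Y \<in> borel_measurable M \<and> integrable M (\<lambda>\<omega>. \<bar>Y \<omega>\<bar>^3)"

context prob_space begin

lemma L3_const: "L3 M (\<lambda>_. c)"
  unfolding L3_def by auto

lemma L3_add: "L3 M Y \<Longrightarrow> L3 M Y' \<Longrightarrow> L3 M (\<lambda>\<omega>. Y \<omega> + Y' \<omega>)"
  unfolding L3_def
proof (intro conjI)
  assume a: "Y \<in> borel_measurable M \<and> integrable M (\<lambda>\<omega>. \<bar>Y \<omega>\<bar> ^ 3)"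
    "Y' \<in> borel_measurable M \<and> integrable M (\<lambda>\<omega>. \<bar>Y' \<omega>\<bar> ^ 3)"
  then show "(\<lambda>\<omega>. Y \<omega> + Y' \<omega>) \<in> borel_measurable M" by auto
  show "integrable M (\<lambda>\<omega>. \<bar>Y \<omega> + Y' \<omega>\<bar> ^ 3)"
  proof (rule Bochner_Integration.integrable_bound[where f="\<lambda>\<omega>. 4 * \<bar>Y \<omega>\<bar>^3 + 4 * \<bar>Y' \<omega>\<bar>^3"])
    show "integrable M (\<lambda>\<omega>. 4 * \<bar>Y \<omega>\<bar>^3 + 4 * \<bar>Y' \<omega>\<bar>^3)" using a by auto
    show "(\<lambda>\<omega>. \<bar>Y \<omega> + Y' \<omega>\<bar> ^ 3) \<in> borel_measurable M" using a by auto
    show "AE x in M. norm (\<bar>Y x + Y' x\<bar> ^ 3) \<le> norm (4 * \<bar>Y x\<bar>^3 + 4 * \<bar>Y' x\<bar>^3)"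
      using cube_add[unfolded distrib_left] by (intro AE_I2) simp
  qed
qed

lemma L3_cmult: "L3 M Y \<Longrightarrow> L3 M (\<lambda>\<omega>. c * Y \<omega>)"
  unfolding L3_def by (auto simp: abs_mult power_mult_distrib)

lemma L3_bound: "Y \<in> borel_measurable M \<Longrightarrow> L3 M Y' \<Longrightarrow> (AE \<omega> in M. \<bar>Y \<omega>\<bar> \<le> \<bar>Y' \<omega>\<bar>) \<Longrightarrow> L3 M Y"
  unfolding L3_def
proof (intro conjI)
  assume a: "Y \<in> borel_measurable M" "Y' \<in> borel_measurable M \<and> integrable M (\<lambda>\<omega>. \<bar>Y' \<omega>\<bar>^3)"
    "AE \<omega> in M. \<bar>Y \<omega>\<bar> \<le> \<bar>Y' \<omega>\<bar>"
  show "Y \<in> borel_measurable M" by fact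
  show "integrable M (\<lambda>\<omega>. \<bar>Y \<omega>\<bar> ^ 3)"
    by (rule Bochner_Integration.integrable_bound[where f="\<lambda>\<omega>. \<bar>Y' \<omega>\<bar>^3"])
       (use a in \<open>auto elim!: AE_mp intro!: AE_I2 power_mono\<close>)
qed

lemma L3_sum: "finite S \<Longrightarrow> (\<And>i. i \<in> S \<Longrightarrow> L3 M (Y i)) \<Longrightarrow> L3 M (\<lambda>\<omega>. \<Sum>i\<in>S. Y i \<omega>)"
  by (induction S rule: finite_induct) (auto intro: L3_add L3_const)

lemma L3_abs: "L3 M Y \<Longrightarrow> L3 M (\<lambda>\<omega>. \<bar>Y \<omega>\<bar>)"
  unfolding L3_def by auto

end




context prob_space begin

lemma swap_bound:
  fixes F1 :: "'s \<times> 's \<Rightarrow> real" and F2 :: "'s \<times> 's \<Rightarrow> real"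
    and S :: "'s measure" and T :: "'s measure" and S' :: "'s measure"
    and U :: "'a \<Rightarrow> 's" and V :: "'a \<Rightarrow> 's" and U' :: "'a \<Rightarrow> 's" and G :: "'s \<Rightarrow> ennreal"
  assumes iUV: "indep_var S U T V" and iUV': "indep_var S' U' T V"
    and F1[measurable]: "F1 \<in> borel_measurable (S \<Otimes>\<^sub>M T)"
    and F2[measurable]: "F2 \<in> borel_measurable (S' \<Otimes>\<^sub>M T)"
    and int1: "integrable M (\<lambda>\<omega>. F1 (U \<omega>, V \<omega>))"
    and int2: "integrable M (\<lambda>\<omega>. F2 (U' \<omega>, V \<omega>))"
    and G[measurable]: "G \<in> borel_measurable T"
    and bnd: "\<And>v. v \<in> space T \<Longrightarrow>
       ennreal \<bar>(\<integral>\<omega>. F1 (U \<omega>, v) \<partial>M) - (\<integral>\<omega>. F2 (U' \<omega>, v) \<partial>M)\<bar> \<le> G v"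
  shows "ennreal \<bar>(\<integral>\<omega>. F1 (U \<omega>, V \<omega>) \<partial>M) - (\<integral>\<omega>. F2 (U' \<omega>, V \<omega>) \<partial>M)\<bar>
           \<le> (\<integral>\<^sup>+\<omega>. G (V \<omega>) \<partial>M)"
proof -
  have rv: "random_variable S U" "random_variable T V" "random_variable S' U'"
    and eqd: "distr M S U \<Otimes>\<^sub>M distr M T V = distr M (S \<Otimes>\<^sub>M T) (\<lambda>x. (U x, V x))"
    and eqd': "distr M S' U' \<Otimes>\<^sub>M distr M T V = distr M (S' \<Otimes>\<^sub>M T) (\<lambda>x. (U' x, V x))"
    using iUV iUV' unfolding indep_var_distribution_eq by auto
  note rv[measurable]
  interpret PU: prob_space "distr M S U" by (rule prob_space_distr) (rule rv)
  interpret PU': prob_space "distr M S' U'" by (rule prob_space_distr) (rule rv)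
  interpret PV: prob_space "distr M T V" by (rule prob_space_distr) (rule rv)
  interpret P1: pair_prob_space "distr M S U" "distr M T V" ..
  interpret P2: pair_prob_space "distr M S' U'" "distr M T V" ..
  have i1: "integrable (distr M S U \<Otimes>\<^sub>M distr M T V) F1"
    unfolding eqd using int1 by (subst integrable_distr_eq) auto
  have i2: "integrable (distr M S' U' \<Otimes>\<^sub>M distr M T V) F2"
    unfolding eqd' using int2 by (subst integrable_distr_eq) auto
  have e1: "(\<integral>\<omega>. F1 (U \<omega>, V \<omega>) \<partial>M) = (\<integral>v. (\<integral>u. F1 (u, v) \<partial>distr M S U) \<partial>distr M T V)"
  proof -
    have "(\<integral>\<omega>. F1 (U \<omega>, V \<omega>) \<partial>M) = integral\<^sup>L (distr M S U \<Otimes>\<^sub>M distr M T V) F1"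
      unfolding eqd by (subst integral_distr) auto
    also have "\<dots> = (\<integral>v. (\<integral>u. F1 (u, v) \<partial>distr M S U) \<partial>distr M T V)"
      using P1.integral_snd[of "\<lambda>u v. F1 (u, v)"] i1 by simp
    finally show ?thesis .
  qed
  have e2: "(\<integral>\<omega>. F2 (U' \<omega>, V \<omega>) \<partial>M) = (\<integral>v. (\<integral>u. F2 (u, v) \<partial>distr M S' U') \<partial>distr M T V)"
  proof -
    have "(\<integral>\<omega>. F2 (U' \<omega>, V \<omega>) \<partial>M) = integral\<^sup>L (distr M S' U' \<Otimes>\<^sub>M distr M T V) F2"
      unfolding eqd' by (subst integral_distr) auto
    also have "\<dots> = (\<integral>v. (\<integral>u. F2 (u, v) \<partial>distr M S' U') \<partial>distr M T V)"
      using P2.integral_snd[of "\<lambda>u v. F2 (u, v)"] i2 by simp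
    finally show ?thesis .
  qed
  have g1: "integrable (distr M T V) (\<lambda>v. \<integral>u. F1 (u, v) \<partial>distr M S U)"
    using P1.integrable_snd[of "\<lambda>u v. F1 (u, v)"] i1 by simp
  have g2: "integrable (distr M T V) (\<lambda>v. \<integral>u. F2 (u, v) \<partial>distr M S' U')"
    using P2.integrable_snd[of "\<lambda>u v. F2 (u, v)"] i2 by simp
  have "ennreal \<bar>(\<integral>\<omega>. F1 (U \<omega>, V \<omega>) \<partial>M) - (\<integral>\<omega>. F2 (U' \<omega>, V \<omega>) \<partial>M)\<bar>
      = ennreal (norm (\<integral>v. (\<integral>u. F1 (u, v) \<partial>distr M S U) - (\<integral>u. F2 (u, v) \<partial>distr M S' U') \<partial>distr M T V))"
    unfolding e1 e2 using g1 g2 by simp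
  also have "\<dots> \<le> (\<integral>\<^sup>+v. norm ((\<integral>u. F1 (u, v) \<partial>distr M S U) - (\<integral>u. F2 (u, v) \<partial>distr M S' U')) \<partial>distr M T V)"
    by (rule integral_norm_bound_ennreal) (use g1 g2 in auto)
  also have "\<dots> \<le> (\<integral>\<^sup>+v. G v \<partial>distr M T V)"
  proof (rule nn_integral_mono)
    fix v assume v: "v \<in> space (distr M T V)"
    then have vT: "v \<in> space T" by simp
    have m1: "(\<lambda>u. F1 (u, v)) \<in> borel_measurable S" using vT by measurable
    have m2: "(\<lambda>u. F2 (u, v)) \<in> borel_measurable S'" using vT by measurable
    have "(\<integral>u. F1 (u, v) \<partial>distr M S U) = (\<integral>\<omega>. F1 (U \<omega>, v) \<partial>M)"
      by (rule integral_distr[OF rv(1) m1])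
    moreover have "(\<integral>u. F2 (u, v) \<partial>distr M S' U') = (\<integral>\<omega>. F2 (U' \<omega>, v) \<partial>M)"
      by (rule integral_distr[OF rv(3) m2])
    ultimately show "ennreal (norm ((\<integral>u. F1 (u, v) \<partial>distr M S U) - (\<integral>u. F2 (u, v) \<partial>distr M S' U'))) \<le> G v"
      using bnd[OF vT] by simp
  qed
  also have "\<dots> = (\<integral>\<^sup>+\<omega>. G (V \<omega>) \<partial>M)"
    by (rule nn_integral_distr) auto
  finally show ?thesis .
qed

end



lemma sqrt_cube: "0 \<le> (x::real) \<Longrightarrow> sqrt x ^ 3 = x powr (3/2)"
proof (cases "x = 0")
  case False
  assume x: "0 \<le> x"
  then have xp: "x > 0" using False by simp
  have "x powr (3/2) = x powr (1 + 1/2)" by simp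
  also have "\<dots> = x powr 1 * x powr (1/2)" by (rule powr_add)
  also have "\<dots> = x * x powr (1/2)" using xp by simp
  also have "x powr (1/2) = sqrt x" using xp by (simp add: powr_half_sqrt)
  finally have "x powr (3/2) = x * sqrt x" .
  moreover have "sqrt x ^ 3 = x * sqrt x" using x by (simp add: power3_eq_cube)
  ultimately show ?thesis by simp
qed simp

lemma q_sum: assumes "2 \<le> n" shows "(\<Sum>i=1..n-1. q n i) = 1"
proof -
  define H where "H = (harm (n - 1) :: real)"
  have Hp: "H > 0" unfolding H_def using assms by (intro harm_pos) simp
  have H1: "(\<Sum>i=1..n-1. 1 / real i) = H" unfolding H_def harm_def by (simp add: divide_inverse)
  have H2: "(\<Sum>i=1..n-1. 1 / (real n - real i)) = H"
  proof -
    have "(\<Sum>i=1..n-1. 1 / (real n - real i)) = (\<Sum>i=1..n-1. 1 / (real n - real (n - 1 + 1 - i)))"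
      by (rule sum.atLeastAtMost_rev)
    also have "\<dots> = (\<Sum>i=1..n-1. 1 / real i)"
      using assms by (intro sum.cong) (auto simp: of_nat_diff)
    finally show ?thesis using H1 by simp
  qed
  have e: "q n i = (1 / (2 * H)) * (1 / real i + 1 / (real n - real i))" if "i \<in> {1..n-1}" for i
  proof -
    have i: "real i > 0" "real n - real i > 0" using that assms by auto
    show ?thesis unfolding q_def H_def[symmetric] using i Hp by (simp add: field_simps)
  qed
  have "(\<Sum>i=1..n-1. q n i) = (1 / (2 * H)) * ((\<Sum>i=1..n-1. 1 / real i) + (\<Sum>i=1..n-1. 1 / (real n - real i)))"
  proof -
    have "(\<Sum>i=1..n-1. q n i) = (\<Sum>i=1..n-1. (1 / (2 * H)) * (1 / real i + 1 / (real n - real i)))"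
      by (rule sum.cong) (simp_all add: e)
    also have "\<dots> = (1 / (2 * H)) * (\<Sum>i=1..n-1. (1 / real i + 1 / (real n - real i)))"
      by (rule sum_distrib_left[symmetric])
    finally show ?thesis by (simp only: sum.distrib)
  qed
  also have "\<dots> = 1" using Hp unfolding H1 H2 by simp
  finally show ?thesis .
qed

lemma gen_sets_comp:
  assumes Z: "Z \<in> measurable M N" and g: "g \<in> measurable N K"
  shows "{(\<lambda>\<omega>. g (Z \<omega>)) -` A \<inter> space M | A. A \<in> sets K} \<subseteq> gen_sets M Z N"
proof
  fix S assume "S \<in> {(\<lambda>\<omega>. g (Z \<omega>)) -` A \<inter> space M | A. A \<in> sets K}"
  then obtain A where A: "A \<in> sets K" "S = (\<lambda>\<omega>. g (Z \<omega>)) -` A \<inter> space M" by blast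
  have "S = Z -` (g -` A \<inter> space N) \<inter> space M"
    using A measurable_space[OF Z] by auto
  moreover have "g -` A \<inter> space N \<in> sets N" using measurable_sets[OF g A(1)] .
  ultimately show "S \<in> gen_sets M Z N" unfolding gen_sets_def by blast
qed

lemma (in prob_space) indep_pair:
  assumes ind: "indep_vars (\<lambda>_. E) Y UNIV" and c: "c \<notin> B"
    and g2: "g2 \<in> measurable (PiM B (\<lambda>_. E)) T"
  shows "indep_var E (Y c) T (\<lambda>\<omega>. g2 (\<lambda>d\<in>B. Y d \<omega>))"
proof -
  have "indep_var (PiM {c} (\<lambda>_. E)) (\<lambda>\<omega>. \<lambda>i\<in>{c}. Y i \<omega>) (PiM B (\<lambda>_. E)) (\<lambda>\<omega>. \<lambda>i\<in>B. Y i \<omega>)"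
    by (rule indep_var_restrict[OF ind]) (use c in auto)
  from indep_var_compose[OF this measurable_component_singleton[of c "{c}" "\<lambda>_. E"] g2]
  show ?thesis by (simp add: o_def)
qed

lemma meas_idx:
  fixes F :: "nat \<Rightarrow> 'a \<Rightarrow> 'b"
  assumes "J \<in> measurable M (count_space UNIV)" "\<And>i. F i \<in> measurable M N"
  shows "(\<lambda>\<omega>. F (J \<omega>) \<omega>) \<in> measurable M N"
  by (rule measurable_compose_countable'[OF _ assms(1)]) (use assms(2) in auto)

lemma meas_PiM_UNIV:
  assumes "\<And>i. (\<lambda>x. Xf i x) \<in> measurable N (M i)"
  shows "(\<lambda>x i. Xf i x) \<in> measurable N (PiM UNIV M)"
  using measurable_restrict[of UNIV Xf N M] assms by (simp add: restrict_UNIV)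




context prob_space begin

lemma L3_F3:
  assumes "L3 M Y" "f \<in> F3"
  shows "integrable M (\<lambda>\<omega>. f (Y \<omega>))"
proof -
  obtain K where K: "\<And>x. \<bar>f x\<bar> \<le> K * (1 + \<bar>x\<bar>^3)" using F3_growth[OF assms(2)] by blast
  have Y: "Y \<in> borel_measurable M" "integrable M (\<lambda>\<omega>. \<bar>Y \<omega>\<bar>^3)" using assms(1) unfolding L3_def by auto
  note fm = F3_meas[OF assms(2)]
  show ?thesis
  proof (rule Bochner_Integration.integrable_bound[where f="\<lambda>\<omega>. K * (1 + \<bar>Y \<omega>\<bar>^3)"])
    show "integrable M (\<lambda>\<omega>. K * (1 + \<bar>Y \<omega>\<bar>^3))" using Y by auto
    show "(\<lambda>\<omega>. f (Y \<omega>)) \<in> borel_measurable M" using measurable_compose[OF Y(1) fm] .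
    show "AE x in M. norm (f (Y x)) \<le> norm (K * (1 + \<bar>Y x\<bar>^3))"
      using K by (intro AE_I2) (simp, meson abs_ge_self order_trans)
  qed
qed

lemma inner_bound:
  assumes f: "f \<in> F3" and a: "a \<ge> 0" and Y: "Y \<in> borel_measurable M" and Y': "Y' \<in> borel_measurable M"
  shows "ennreal \<bar>(\<integral>\<omega>. f (a * Y \<omega> + c) \<partial>M) - (\<integral>\<omega>. f (a * Y' \<omega> + c) \<partial>M)\<bar>
         \<le> ennreal (a^3) * zeta3 (distr M borel Y) (distr M borel Y')"
proof (cases "a = 0")
  case True then show ?thesis by simp
next
  case False
  with a have ap: "a > 0" by simp
  define h where "h = (\<lambda>x. f (a * x + c) / a^3)"
  have hF: "h \<in> F3" unfolding h_def by (rule F3_scale[OF f ap])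
  have hm: "h \<in> borel_measurable borel" by (rule F3_meas[OF hF])
  have e: "(\<integral>\<omega>. f (a * Z \<omega> + c) \<partial>M) = a^3 * (\<integral>x. h x \<partial>distr M borel Z)"
    if Z: "Z \<in> borel_measurable M" for Z
  proof -
    have "(\<integral>\<omega>. f (a * Z \<omega> + c) \<partial>M) = (\<integral>\<omega>. a^3 * h (Z \<omega>) \<partial>M)"
      unfolding h_def using ap by simp
    also have "\<dots> = a^3 * (\<integral>\<omega>. h (Z \<omega>) \<partial>M)" by simp
    also have "(\<integral>\<omega>. h (Z \<omega>) \<partial>M) = (\<integral>x. h x \<partial>distr M borel Z)"
      by (rule integral_distr[OF Z hm, symmetric])
    finally show ?thesis .
  qed
  have "ennreal \<bar>(\<integral>\<omega>. f (a * Y \<omega> + c) \<partial>M) - (\<integral>\<omega>. f (a * Y' \<omega> + c) \<partial>M)\<bar>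
      = ennreal (a^3 * \<bar>(\<integral>x. h x \<partial>distr M borel Y) - (\<integral>x. h x \<partial>distr M borel Y')\<bar>)"
    unfolding e[OF Y] e[OF Y'] using ap by (simp add: abs_mult right_diff_distrib[symmetric])
  also have "\<dots> = ennreal (a^3) * ennreal \<bar>(\<integral>x. h x \<partial>distr M borel Y) - (\<integral>x. h x \<partial>distr M borel Y')\<bar>"
    using ap by (simp add: ennreal_mult)
  also have "\<dots> \<le> ennreal (a^3) * zeta3 (distr M borel Y) (distr M borel Y')"
    unfolding zeta3_def by (intro mult_left_mono SUP_upper hF) auto
  finally show ?thesis .
qed

end




context prob_space begin

lemma L3_sel:
  fixes J :: "'a \<Rightarrow> nat"
  assumes J: "J \<in> measurable M (count_space UNIV)"
    and AEJ: "AE \<omega> in M. 1 \<le> J \<omega> \<and> J \<omega> \<le> n"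
    and Ym: "\<And>i. Yf i \<in> borel_measurable M"
    and YL: "\<And>i. 1 \<le> i \<Longrightarrow> i \<le> n \<Longrightarrow> L3 M (Yf i)"
    and cf: "\<And>i. i \<le> n \<Longrightarrow> \<bar>cf i\<bar> \<le> 1"
  shows "L3 M (\<lambda>\<omega>. cf (J \<omega>) * Yf (J \<omega>) \<omega>)"
proof (rule L3_bound)
  show "(\<lambda>\<omega>. cf (J \<omega>) * Yf (J \<omega>) \<omega>) \<in> borel_measurable M"
    by (rule meas_idx[OF J, of "\<lambda>i \<omega>. cf i * Yf i \<omega>"]) (use Ym in auto)
  show "L3 M (\<lambda>\<omega>. \<Sum>i\<in>{1..n}. \<bar>Yf i \<omega>\<bar>)"
    by (intro L3_sum L3_abs YL) auto
  show "AE \<omega> in M. \<bar>cf (J \<omega>) * Yf (J \<omega>) \<omega>\<bar> \<le> \<bar>\<Sum>i\<in>{1..n}. \<bar>Yf i \<omega>\<bar>\<bar>"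
    using AEJ
  proof (rule AE_mp, intro AE_I2 impI)
    fix \<omega> assume "\<omega> \<in> space M" and j: "1 \<le> J \<omega> \<and> J \<omega> \<le> n"
    have "\<bar>cf (J \<omega>) * Yf (J \<omega>) \<omega>\<bar> \<le> 1 * \<bar>Yf (J \<omega>) \<omega>\<bar>"
      unfolding abs_mult using cf[of "J \<omega>"] j by (intro mult_right_mono) auto
    also have "\<dots> \<le> (\<Sum>i\<in>{1..n}. \<bar>Yf i \<omega>\<bar>)"
      using j by (simp, intro member_le_sum) auto
    also have "\<dots> \<le> \<bar>\<Sum>i\<in>{1..n}. \<bar>Yf i \<omega>\<bar>\<bar>" by simp
    finally show "\<bar>cf (J \<omega>) * Yf (J \<omega>) \<omega>\<bar> \<le> \<bar>\<Sum>i\<in>{1..n}. \<bar>Yf i \<omega>\<bar>\<bar>" .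
  qed
qed

end

lemma alg_sq:
  assumes "0 < i" "0 < k" "(s::real) > 0"
  shows "sqrt (real i / real k) * ((x - m) / (s * sqrt (real i))) = (x - m) / (s * sqrt (real k))"
  using assms by (simp add: real_sqrt_divide field_simps)





lemma sum3_div: "(x - p1)/k + (y - p2)/k + (z + p1 + p2 - r)/k = (x + y + z - r)/(k::real)"
  by (cases "k = 0") (simp_all add: field_simps)

theorem lemma3p1:
  fixes M :: "'a measure"
    and X X' b :: "nat \<Rightarrow> 'a \<Rightarrow> real"
    and L I :: "nat \<Rightarrow> 'a \<Rightarrow> nat"
    and N1 N2 :: "'a \<Rightarrow> real"
    and \<mu> \<sigma> \<epsilon> C :: real
    and n :: nat
    and Z :: "nat \<Rightarrow> 'a \<Rightarrow> real" and \<tau> mu :: "nat \<Rightarrow> real"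
    and bb Zs :: "nat \<Rightarrow> 'a \<Rightarrow> real" and d :: "nat \<Rightarrow> ennreal"
  assumes M: "prob_space M"
    and measX: "\<forall>j. X j \<in> borel_measurable M"
    and measX': "\<forall>j. X' j \<in> borel_measurable M"
    and measb: "\<forall>m. b m \<in> borel_measurable M"
    and measL: "\<forall>m. L m \<in> measurable M (count_space UNIV)"
    and L_dist: "\<forall>m\<ge>2. \<forall>i\<in>{1..m-1}. measure M {\<omega>\<in>space M. L m \<omega> = i} = q m i"
    and I_L: "\<forall>m\<ge>2. \<forall>\<omega>\<in>space M. I m \<omega> = max (L m \<omega>) (m - L m \<omega>)"
    and X'_dist: "\<forall>j. distr M borel (X' j) = distr M borel (X j)"
    and N1: "distributed M lborel N1 std_normal_density"
    and N2: "distributed M lborel N2 std_normal_density"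
    and indep: "\<forall>m\<ge>2. prob_space.indep_sets M
        (\<lambda>c. case c of
            CX \<Rightarrow> gen_sets M (\<lambda>\<omega> j. X j \<omega>) (PiM UNIV (\<lambda>_. borel))
          | CX' \<Rightarrow> gen_sets M (\<lambda>\<omega> j. X' j \<omega>) (PiM UNIV (\<lambda>_. borel))
          | CIb \<Rightarrow> gen_sets M (\<lambda>\<omega>. (I m \<omega>, b m \<omega>)) (count_space UNIV \<Otimes>\<^sub>M borel)
          | CN1 \<Rightarrow> gen_sets M N1 borel
          | CN2 \<Rightarrow> gen_sets M N2 borel) UNIV"
    and recur: "\<forall>m\<ge>2. distr M borel (X m) =
        distr M borel (\<lambda>\<omega>. X (I m \<omega>) \<omega> + X' (m - I m \<omega>) \<omega> + b m \<omega>)"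
    and pos: "\<mu> > 0" "\<sigma> > 0" "\<epsilon> > 0" "C > 0"
    and X3: "\<forall>j\<ge>1. integrable M (\<lambda>\<omega>. \<bar>X j \<omega>\<bar> ^ 3)"
    and b3: "\<forall>m\<ge>2. integrable M (\<lambda>\<omega>. \<bar>b m \<omega>\<bar> ^ 3)"
    and mean_X: "\<forall>m\<ge>1. \<bar>mean M (X m) - \<mu> * real m\<bar> \<le> C * real m powr (1/2 - \<epsilon>)"
    and var_X: "\<forall>m\<ge>1. \<bar>var M (X m) - \<sigma>\<^sup>2 * real m\<bar> \<le> C * real m powr (1 - \<epsilon>)"
    and mom_b: "\<forall>m\<ge>2. mean M (\<lambda>\<omega>. \<bar>b m \<omega>\<bar> ^ 3) \<le> real m powr (3/2 - \<epsilon>)"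
    and n: "2 \<le> n"
    and Z_def: "Z = (\<lambda>j \<omega>. (X j \<omega> - mean M (X j)) / (\<sigma> * sqrt (real j)))"
    and tau_def: "\<tau> = (\<lambda>j. sqrt (var M (Z j)))"
    and mu_def: "mu = (\<lambda>j. mean M (X j))"
    and bb_def: "bb = (\<lambda>m \<omega>. (b m \<omega> + mu (I m \<omega>) + mu (m - I m \<omega>) - mu m) / (\<sigma> * sqrt (real m)))"
    and Zs_def: "Zs = (\<lambda>m \<omega>. sqrt (real (I m \<omega>) / real m) * \<tau> (I m \<omega>) * N1 \<omega>
                   + sqrt (real (m - I m \<omega>) / real m) * \<tau> (m - I m \<omega>) * N2 \<omega> + bb m \<omega>)"
    and d_def: "d = (\<lambda>j. zeta3 (distr M borel (Z j)) (distr M borel (\<lambda>\<omega>. \<tau> j * N1 \<omega>)))"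
  shows "d n \<le> (\<integral>\<^sup>+\<omega>. ennreal ((real (n - I n \<omega>) / real n) powr (3/2)) * d (n - I n \<omega>)
                      + ennreal ((real (I n \<omega>) / real n) powr (3/2)) * d (I n \<omega>) \<partial>M)
             + zeta3 (distr M borel (Zs n)) (distr M borel (\<lambda>\<omega>. \<tau> n * N1 \<omega>))"
proof -
  interpret prob_space M by (rule M)
  have n1: "n \<ge> 1" "real n > 0" using n by auto
  have sig: "\<sigma> > 0" using pos by simp
  have sn: "\<sigma> * sqrt (real n) > 0" using sig n1 by simp
  have mX[measurable]: "\<And>j. X j \<in> borel_measurable M" using measX by auto
  have mX'[measurable]: "\<And>j. X' j \<in> borel_measurable M" using measX' by auto
  have mb[measurable]: "b n \<in> borel_measurable M" using measb by auto
  have mL[measurable]: "L n \<in> measurable M (count_space UNIV)" using measL by auto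
  have mN1[measurable]: "N1 \<in> borel_measurable M" using distributed_measurable[OF N1] by simp
  have mN2[measurable]: "N2 \<in> borel_measurable M" using distributed_measurable[OF N2] by simp
  have mXf[measurable]: "(\<lambda>\<omega> j. X j \<omega>) \<in> measurable M (PiM UNIV (\<lambda>_. borel))"
    by (rule meas_PiM_UNIV) simp
  have mX'f[measurable]: "(\<lambda>\<omega> j. X' j \<omega>) \<in> measurable M (PiM UNIV (\<lambda>_. borel))"
    by (rule meas_PiM_UNIV) simp
  define FF where "FF = (\<lambda>c. case c of
            CX \<Rightarrow> gen_sets M (\<lambda>\<omega> j. X j \<omega>) (PiM UNIV (\<lambda>_. borel))
          | CX' \<Rightarrow> gen_sets M (\<lambda>\<omega> j. X' j \<omega>) (PiM UNIV (\<lambda>_. borel))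
          | CIb \<Rightarrow> gen_sets M (\<lambda>\<omega>. (I n \<omega>, b n \<omega>)) (count_space UNIV \<Otimes>\<^sub>M borel)
          | CN1 \<Rightarrow> gen_sets M N1 borel
          | CN2 \<Rightarrow> gen_sets M N2 borel)"
  have ind: "indep_sets FF UNIV" using indep n unfolding FF_def by blast
  have mIb[measurable]: "(\<lambda>\<omega>. (I n \<omega>, b n \<omega>)) \<in> measurable M (count_space UNIV \<Otimes>\<^sub>M borel)"
  proof (rule measurableI)
    show "\<And>x. x \<in> space M \<Longrightarrow> (I n x, b n x) \<in> space (count_space UNIV \<Otimes>\<^sub>M borel)"
      by (simp add: space_pair_measure)
    fix A :: "(nat \<times> real) set" assume "A \<in> sets (count_space UNIV \<Otimes>\<^sub>M borel)"
    then have "(\<lambda>\<omega>. (I n \<omega>, b n \<omega>)) -` A \<inter> space M \<in> FF CIb"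
      unfolding FF_def gen_sets_def by auto
    moreover have "FF CIb \<subseteq> events" using ind unfolding indep_sets_def by blast
    ultimately show "(\<lambda>\<omega>. (I n \<omega>, b n \<omega>)) -` A \<inter> space M \<in> events" by blast
  qed
  have mI[measurable]: "I n \<in> measurable M (count_space UNIV)"
    using measurable_compose[OF mIb measurable_fst] by simp
  have mnI[measurable]: "(\<lambda>\<omega>. n - I n \<omega>) \<in> measurable M (count_space UNIV)"
  proof -
    have "(\<lambda>i::nat. n - i) \<in> measurable (count_space UNIV) (count_space UNIV)" by simp
    from measurable_compose[OF mI this] show ?thesis .
  qed
  have AEL: "AE \<omega> in M. L n \<omega> \<in> {1..n-1}"
  proof -
    have s: "{\<omega>\<in>space M. L n \<omega> \<in> {1..n-1}} = (\<Union>i\<in>{1..n-1}. {\<omega>\<in>space M. L n \<omega> = i})" by auto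
    have "prob {\<omega>\<in>space M. L n \<omega> \<in> {1..n-1}} = (\<Sum>i\<in>{1..n-1}. prob {\<omega>\<in>space M. L n \<omega> = i})"
      unfolding s by (rule finite_measure_finite_Union) (auto simp: disjoint_family_on_def)
    also have "\<dots> = (\<Sum>i=1..n-1. q n i)" using L_dist n by (intro sum.cong) auto
    also have "\<dots> = 1" by (rule q_sum[OF n])
    finally have "AE \<omega> in M. \<omega> \<in> {\<omega>\<in>space M. L n \<omega> \<in> {1..n-1}}" by (rule AE_prob_1)
    then show ?thesis by (rule AE_mp) (auto intro!: AE_I2)
  qed
  have AEI: "AE \<omega> in M. 1 \<le> I n \<omega> \<and> I n \<omega> \<le> n - 1"
    using AEL by (rule AE_mp) (use I_L n in \<open>auto intro!: AE_I2 simp: max_def\<close>)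
  have AEI1: "AE \<omega> in M. 1 \<le> I n \<omega> \<and> I n \<omega> \<le> n" using AEI by (rule AE_mp) (auto intro!: AE_I2)
  have AEI2: "AE \<omega> in M. 1 \<le> n - I n \<omega> \<and> n - I n \<omega> \<le> n" using AEI by (rule AE_mp) (auto intro!: AE_I2)
  define zX where "zX = (\<lambda>j x. (x - mu j) / (\<sigma> * sqrt (real j)))"
  define sq where "sq = (\<lambda>i::nat. sqrt (real i / real n))"
  define cc where "cc = (\<lambda>i \<beta>. (\<beta> + mu i + mu (n - i) - mu n) / (\<sigma> * sqrt (real n)))"
  have mzX[measurable]: "\<And>j. zX j \<in> borel_measurable borel" unfolding zX_def by measurable
  have mcc[measurable]: "\<And>i. cc i \<in> borel_measurable borel" unfolding cc_def by measurable
  have sq1: "\<And>i. i \<le> n \<Longrightarrow> \<bar>sq i\<bar> \<le> 1" unfolding sq_def using n1 by simp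
  have sq0: "\<And>i. sq i \<ge> 0" unfolding sq_def by simp
  have sq3: "\<And>i. sq i ^ 3 = (real i / real n) powr (3/2)" unfolding sq_def by (rule sqrt_cube) simp
  have ZzX: "\<And>j \<omega>. Z j \<omega> = zX j (X j \<omega>)" by (simp add: Z_def zX_def mu_def)
  have ZzX': "\<And>j. Z j = (\<lambda>\<omega>. zX j (X j \<omega>))" by (simp add: fun_eq_iff ZzX)
  have mZ[measurable]: "\<And>j. Z j \<in> borel_measurable M" unfolding ZzX' by measurable
  define Wf where "Wf = (\<lambda>i \<omega>. sq i * zX i (X i \<omega>) + sq (n - i) * zX (n - i) (X' (n - i) \<omega>) + cc i (b n \<omega>))"
  define W1f where "W1f = (\<lambda>i \<omega>. sq i * (\<tau> i * N1 \<omega>) + sq (n - i) * zX (n - i) (X' (n - i) \<omega>) + cc i (b n \<omega>))"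
  define W2f where "W2f = (\<lambda>i \<omega>. sq i * (\<tau> i * N1 \<omega>) + sq (n - i) * (\<tau> (n - i) * N2 \<omega>) + cc i (b n \<omega>))"
  define W where "W = (\<lambda>\<omega>. Wf (I n \<omega>) \<omega>)"
  define W1 where "W1 = (\<lambda>\<omega>. W1f (I n \<omega>) \<omega>)"
  define W2 where "W2 = (\<lambda>\<omega>. W2f (I n \<omega>) \<omega>)"
  have mW[measurable]: "W \<in> borel_measurable M" unfolding W_def
    by (rule meas_idx[OF mI]) (unfold Wf_def, measurable)
  have mW1[measurable]: "W1 \<in> borel_measurable M" unfolding W1_def
    by (rule meas_idx[OF mI]) (unfold W1f_def, measurable)
  have mW2[measurable]: "W2 \<in> borel_measurable M" unfolding W2_def
    by (rule meas_idx[OF mI]) (unfold W2f_def, measurable)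
  have Zs2: "Zs n = W2"
    by (simp add: fun_eq_iff Zs_def W2_def W2f_def bb_def sq_def cc_def mult.assoc)
  have L3Z: "L3 M (\<lambda>\<omega>. zX j (X j \<omega>))" if j: "j \<ge> 1" for j
  proof -
    have "L3 M (X j)" unfolding L3_def using X3 j by auto
    then have "L3 M (\<lambda>\<omega>. (1 / (\<sigma> * sqrt (real j))) * (X j \<omega> + (- mu j)))"
      by (intro L3_cmult L3_add L3_const)
    moreover have "(\<lambda>\<omega>. (1 / (\<sigma> * sqrt (real j))) * (X j \<omega> + (- mu j))) = (\<lambda>\<omega>. zX j (X j \<omega>))"
      unfolding zX_def using j sig by (simp add: fun_eq_iff field_simps)
    ultimately show ?thesis by simp
  qed
  have X'3: "integrable M (\<lambda>\<omega>. \<bar>X' j \<omega>\<bar>^3)" if j: "j \<ge> 1" for j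
  proof -
    have "integrable M (\<lambda>\<omega>. \<bar>X j \<omega>\<bar>^3)" using X3 j by auto
    then have "integrable (distr M borel (X j)) (\<lambda>x. \<bar>x\<bar>^3)"
      by (subst integrable_distr_eq) auto
    then have "integrable (distr M borel (X' j)) (\<lambda>x. \<bar>x\<bar>^3)" using X'_dist by simp
    then show ?thesis by (subst (asm) integrable_distr_eq) auto
  qed
  have L3Z': "L3 M (\<lambda>\<omega>. zX j (X' j \<omega>))" if j: "j \<ge> 1" for j
  proof -
    have "L3 M (X' j)" unfolding L3_def using X'3 j by auto
    then have "L3 M (\<lambda>\<omega>. (1 / (\<sigma> * sqrt (real j))) * (X' j \<omega> + (- mu j)))"
      by (intro L3_cmult L3_add L3_const)
    moreover have "(\<lambda>\<omega>. (1 / (\<sigma> * sqrt (real j))) * (X' j \<omega> + (- mu j))) = (\<lambda>\<omega>. zX j (X' j \<omega>))"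
      unfolding zX_def using j sig by (simp add: fun_eq_iff field_simps)
    ultimately show ?thesis by simp
  qed
  have LN1: "L3 M N1"
  proof -
    have "integrable lborel (\<lambda>x. std_normal_density x * \<bar>x\<bar>^3)"
      by (rule integrable_std_normal_moment_abs)
    then have "integrable M (\<lambda>\<omega>. \<bar>N1 \<omega>\<bar>^3)"
      by (subst (asm) distributed_integrable[OF N1]) auto
    then show ?thesis unfolding L3_def by simp
  qed
  have LN2: "L3 M N2"
  proof -
    have "integrable lborel (\<lambda>x. std_normal_density x * \<bar>x\<bar>^3)"
      by (rule integrable_std_normal_moment_abs)
    then have "integrable M (\<lambda>\<omega>. \<bar>N2 \<omega>\<bar>^3)"
      by (subst (asm) distributed_integrable[OF N2]) auto
    then show ?thesis unfolding L3_def by simp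
  qed
  have Lb: "L3 M (b n)" unfolding L3_def using b3 n by auto
  have Lmu: "L3 M (\<lambda>\<omega>. mu (I n \<omega>) + mu (n - I n \<omega>) + (- mu n))"
  proof (rule L3_bound)
    show "(\<lambda>\<omega>. mu (I n \<omega>) + mu (n - I n \<omega>) + (- mu n)) \<in> borel_measurable M" by measurable
    show "L3 M (\<lambda>_. 3 * (\<Sum>i\<le>n. \<bar>mu i\<bar>))" by (rule L3_const)
    show "AE \<omega> in M. \<bar>mu (I n \<omega>) + mu (n - I n \<omega>) + - mu n\<bar> \<le> \<bar>3 * (\<Sum>i\<le>n. \<bar>mu i\<bar>)\<bar>"
      using AEI1
    proof (rule AE_mp, intro AE_I2 impI)
      fix \<omega> assume "1 \<le> I n \<omega> \<and> I n \<omega> \<le> n"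
      then have a: "\<bar>mu (I n \<omega>)\<bar> \<le> (\<Sum>i\<le>n. \<bar>mu i\<bar>)" "\<bar>mu (n - I n \<omega>)\<bar> \<le> (\<Sum>i\<le>n. \<bar>mu i\<bar>)"
        "\<bar>mu n\<bar> \<le> (\<Sum>i\<le>n. \<bar>mu i\<bar>)"
        by (auto intro!: member_le_sum[where f="\<lambda>i. \<bar>mu i\<bar>", simplified])
      have "0 \<le> (\<Sum>i\<le>n. \<bar>mu i\<bar>)" by (simp add: sum_nonneg)
      then show "\<bar>mu (I n \<omega>) + mu (n - I n \<omega>) + - mu n\<bar> \<le> \<bar>3 * (\<Sum>i\<le>n. \<bar>mu i\<bar>)\<bar>"
        using a by linarith
    qed
  qed
  have Lcc: "L3 M (\<lambda>\<omega>. cc (I n \<omega>) (b n \<omega>))"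
  proof -
    have "L3 M (\<lambda>\<omega>. (1 / (\<sigma> * sqrt (real n))) * (b n \<omega> + (mu (I n \<omega>) + mu (n - I n \<omega>) + (- mu n))))"
      by (intro L3_cmult L3_add Lb Lmu)
    moreover have "(\<lambda>\<omega>. (1 / (\<sigma> * sqrt (real n))) * (b n \<omega> + (mu (I n \<omega>) + mu (n - I n \<omega>) + (- mu n))))
        = (\<lambda>\<omega>. cc (I n \<omega>) (b n \<omega>))"
      unfolding cc_def using sn by (simp add: fun_eq_iff field_simps)
    ultimately show ?thesis by simp
  qed
  have LA: "L3 M (\<lambda>\<omega>. sq (I n \<omega>) * zX (I n \<omega>) (X (I n \<omega>) \<omega>))"
    by (rule L3_sel[OF mI AEI1, of "\<lambda>i \<omega>. zX i (X i \<omega>)" sq]) (auto intro: L3Z sq1)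
  have LA1: "L3 M (\<lambda>\<omega>. sq (I n \<omega>) * (\<tau> (I n \<omega>) * N1 \<omega>))"
    by (rule L3_sel[OF mI AEI1, of "\<lambda>i \<omega>. \<tau> i * N1 \<omega>" sq]) (auto intro: L3_cmult LN1 sq1)
  have LB: "L3 M (\<lambda>\<omega>. sq (n - I n \<omega>) * zX (n - I n \<omega>) (X' (n - I n \<omega>) \<omega>))"
    by (rule L3_sel[OF mnI AEI2, of "\<lambda>i \<omega>. zX i (X' i \<omega>)" sq]) (auto intro: L3Z' sq1)
  have LB2: "L3 M (\<lambda>\<omega>. sq (n - I n \<omega>) * (\<tau> (n - I n \<omega>) * N2 \<omega>))"
    by (rule L3_sel[OF mnI AEI2, of "\<lambda>i \<omega>. \<tau> i * N2 \<omega>" sq]) (auto intro: L3_cmult LN2 sq1)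
  have LW: "L3 M W" unfolding W_def Wf_def by (intro L3_add LA LB Lcc)
  have LW1: "L3 M W1" unfolding W1_def W1f_def by (intro L3_add LA1 LB Lcc)
  have LW2: "L3 M W2" unfolding W2_def W2f_def by (intro L3_add LA1 LB2 Lcc)
  have LZn: "L3 M (Z n)" unfolding ZzX' using L3Z n1 by simp
  have LtN: "L3 M (\<lambda>\<omega>. \<tau> n * N1 \<omega>)" by (intro L3_cmult LN1)
  have mR[measurable]: "(\<lambda>\<omega>. X (I n \<omega>) \<omega> + X' (n - I n \<omega>) \<omega> + b n \<omega>) \<in> borel_measurable M"
    by (rule meas_idx[OF mI, of "\<lambda>i \<omega>. X i \<omega> + X' (n - i) \<omega> + b n \<omega>"]) measurable
  have stepA: "(\<integral>\<omega>. g (Z n \<omega>) \<partial>M) = (\<integral>\<omega>. g (W \<omega>) \<partial>M)"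
    if gm[measurable]: "g \<in> borel_measurable borel" for g :: "real \<Rightarrow> real"
  proof -
    have "(\<integral>x. g (zX n x) \<partial>distr M borel (X n)) = (\<integral>\<omega>. g (zX n (X n \<omega>)) \<partial>M)"
      by (rule integral_distr) auto
    then have "(\<integral>\<omega>. g (Z n \<omega>) \<partial>M) = (\<integral>x. g (zX n x) \<partial>distr M borel (X n))"
      by (simp add: ZzX)
    also have "\<dots> = (\<integral>x. g (zX n x) \<partial>distr M borel (\<lambda>\<omega>. X (I n \<omega>) \<omega> + X' (n - I n \<omega>) \<omega> + b n \<omega>))"
      using recur n by simp
    also have "\<dots> = (\<integral>\<omega>. g (zX n (X (I n \<omega>) \<omega> + X' (n - I n \<omega>) \<omega> + b n \<omega>)) \<partial>M)"
      by (rule integral_distr) auto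
    also have "\<dots> = (\<integral>\<omega>. g (W \<omega>) \<partial>M)"
    proof (rule integral_cong_AE)
      show "(\<lambda>\<omega>. g (zX n (X (I n \<omega>) \<omega> + X' (n - I n \<omega>) \<omega> + b n \<omega>))) \<in> borel_measurable M" by measurable
      show "(\<lambda>\<omega>. g (W \<omega>)) \<in> borel_measurable M" by measurable
      show "AE \<omega> in M. g (zX n (X (I n \<omega>) \<omega> + X' (n - I n \<omega>) \<omega> + b n \<omega>)) = g (W \<omega>)"
        using AEI
      proof (rule AE_mp, intro AE_I2 impI)
        fix \<omega> assume "1 \<le> I n \<omega> \<and> I n \<omega> \<le> n - 1"
        then have i: "0 < I n \<omega>" "0 < n - I n \<omega>" by auto
        have "W \<omega> = (X (I n \<omega>) \<omega> - mu (I n \<omega>)) / (\<sigma> * sqrt (real n))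
             + (X' (n - I n \<omega>) \<omega> - mu (n - I n \<omega>)) / (\<sigma> * sqrt (real n))
             + cc (I n \<omega>) (b n \<omega>)"
          unfolding W_def Wf_def sq_def zX_def using alg_sq[OF i(1) _ sig] alg_sq[OF i(2) _ sig] n by simp
        also have "\<dots> = zX n (X (I n \<omega>) \<omega> + X' (n - I n \<omega>) \<omega> + b n \<omega>)"
          unfolding cc_def zX_def by (rule sum3_div)
        finally show "g (zX n (X (I n \<omega>) \<omega> + X' (n - I n \<omega>) \<omega> + b n \<omega>)) = g (W \<omega>)" by simp
      qed
    qed
    finally show ?thesis .
  qed
  define E :: "(nat \<times> (nat \<Rightarrow> real)) measure" where "E = count_space UNIV \<Otimes>\<^sub>M PiM UNIV (\<lambda>_::nat. borel)"
  define Yc where "Yc = (\<lambda>c \<omega>. case c of CX \<Rightarrow> (0::nat, \<lambda>j. X j \<omega>) | CX' \<Rightarrow> (0, \<lambda>j. X' j \<omega>)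
       | CIb \<Rightarrow> (I n \<omega>, \<lambda>_::nat. b n \<omega>) | CN1 \<Rightarrow> (0, \<lambda>_. N1 \<omega>) | CN2 \<Rightarrow> (0, \<lambda>_. N2 \<omega>))"
  have encX: "(\<lambda>x. (0::nat, x)) \<in> measurable (PiM UNIV (\<lambda>_::nat. borel)) E"
    unfolding E_def by measurable
  have encIb: "(\<lambda>p. (fst p, \<lambda>_::nat. snd p)) \<in> measurable (count_space UNIV \<Otimes>\<^sub>M borel) E"
    unfolding E_def
    by (intro measurable_Pair) (auto intro!: meas_PiM_UNIV)
  have encN: "(\<lambda>r. (0::nat, \<lambda>_::nat. r)) \<in> measurable borel E"
    unfolding E_def
    by (intro measurable_Pair) (auto intro!: meas_PiM_UNIV)
  have indY: "indep_vars (\<lambda>_. E) Yc UNIV"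
    unfolding indep_vars_def2
  proof
    show "\<forall>c\<in>UNIV. random_variable E (Yc c)"
    proof
      fix c :: comp
      show "random_variable E (Yc c)"
        using measurable_compose[OF mXf encX] measurable_compose[OF mX'f encX]
          measurable_compose[OF mIb encIb] measurable_compose[OF mN1 encN] measurable_compose[OF mN2 encN]
        by (cases c) (simp_all add: Yc_def)
    qed
    show "indep_sets (\<lambda>c. {Yc c -` A \<inter> space M |A. A \<in> sets E}) UNIV"
    proof (rule indep_sets_mono_sets[OF ind])
      fix c :: comp assume "c \<in> UNIV"
      show "{Yc c -` A \<inter> space M |A. A \<in> sets E} \<subseteq> FF c"
        using gen_sets_comp[OF mXf encX] gen_sets_comp[OF mX'f encX]
          gen_sets_comp[OF mIb encIb] gen_sets_comp[OF mN1 encN] gen_sets_comp[OF mN2 encN]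
        by (cases c) (simp_all add: Yc_def FF_def)
    qed
  qed
  define V1 where "V1 = (\<lambda>\<omega>. (I n \<omega>, \<lambda>j. if j = 0 then b n \<omega> else X' (j - 1) \<omega>))"
  define V2 where "V2 = (\<lambda>\<omega>. (I n \<omega>, \<lambda>j::nat. if j = 0 then b n \<omega> else N1 \<omega>))"
  define g1 where "g1 = (\<lambda>h::comp \<Rightarrow> nat \<times> (nat \<Rightarrow> real). (fst (h CIb), \<lambda>j. if j = 0 then snd (h CIb) 0 else snd (h CX') (j - 1)))"
  define g2 where "g2 = (\<lambda>h::comp \<Rightarrow> nat \<times> (nat \<Rightarrow> real). (fst (h CIb), \<lambda>j::nat. if j = 0 then snd (h CIb) 0 else snd (h CN1) 0))"
  have mg1: "g1 \<in> measurable (PiM {CX', CIb} (\<lambda>_. E)) E"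
    unfolding g1_def E_def
    by (intro measurable_Pair meas_PiM_UNIV) measurable
  have mg2: "g2 \<in> measurable (PiM {CN1, CIb} (\<lambda>_. E)) E"
    unfolding g2_def E_def
    by (intro measurable_Pair meas_PiM_UNIV) measurable
  have iA: "indep_var E (Yc CX) E V1"
  proof -
    have "indep_var E (Yc CX) E (\<lambda>\<omega>. g1 (\<lambda>d\<in>{CX', CIb}. Yc d \<omega>))"
      by (rule indep_pair[OF indY _ mg1]) simp
    moreover have "(\<lambda>\<omega>. g1 (\<lambda>d\<in>{CX', CIb}. Yc d \<omega>)) = V1"
      by (simp add: fun_eq_iff g1_def V1_def Yc_def)
    ultimately show ?thesis by simp
  qed
  have iB: "indep_var E (Yc CN1) E V1"
  proof -
    have "indep_var E (Yc CN1) E (\<lambda>\<omega>. g1 (\<lambda>d\<in>{CX', CIb}. Yc d \<omega>))"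
      by (rule indep_pair[OF indY _ mg1]) simp
    moreover have "(\<lambda>\<omega>. g1 (\<lambda>d\<in>{CX', CIb}. Yc d \<omega>)) = V1"
      by (simp add: fun_eq_iff g1_def V1_def Yc_def)
    ultimately show ?thesis by simp
  qed
  have iC: "indep_var E (Yc CX') E V2"
  proof -
    have "indep_var E (Yc CX') E (\<lambda>\<omega>. g2 (\<lambda>d\<in>{CN1, CIb}. Yc d \<omega>))"
      by (rule indep_pair[OF indY _ mg2]) simp
    moreover have "(\<lambda>\<omega>. g2 (\<lambda>d\<in>{CN1, CIb}. Yc d \<omega>)) = V2"
      by (simp add: fun_eq_iff g2_def V2_def Yc_def)
    ultimately show ?thesis by simp
  qed
  have iD: "indep_var E (Yc CN2) E V2"
  proof -
    have "indep_var E (Yc CN2) E (\<lambda>\<omega>. g2 (\<lambda>d\<in>{CN1, CIb}. Yc d \<omega>))"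
      by (rule indep_pair[OF indY _ mg2]) simp
    moreover have "(\<lambda>\<omega>. g2 (\<lambda>d\<in>{CN1, CIb}. Yc d \<omega>)) = V2"
      by (simp add: fun_eq_iff g2_def V2_def Yc_def)
    ultimately show ?thesis by simp
  qed
  define T1 where "T1 = (\<integral>\<^sup>+\<omega>. ennreal ((real (I n \<omega>) / real n) powr (3/2)) * d (I n \<omega>) \<partial>M)"
  define T2 where "T2 = (\<integral>\<^sup>+\<omega>. ennreal ((real (n - I n \<omega>) / real n) powr (3/2)) * d (n - I n \<omega>) \<partial>M)"
  define zz where "zz = zeta3 (distr M borel (Zs n)) (distr M borel (\<lambda>\<omega>. \<tau> n * N1 \<omega>))"
  have mfst: "(\<lambda>pv. fst (snd pv)) \<in> measurable (E \<Otimes>\<^sub>M E) (count_space UNIV)"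
    unfolding E_def by measurable
  have mG: "(\<lambda>v. h (fst v)) \<in> borel_measurable E" for h :: "nat \<Rightarrow> ennreal"
  proof -
    have "h \<in> borel_measurable (count_space UNIV)" by simp
    from measurable_compose[OF measurable_fst this] show ?thesis unfolding E_def by simp
  qed
  have key: "ennreal \<bar>(\<integral>\<omega>. f (Z n \<omega>) \<partial>M) - (\<integral>\<omega>. f (\<tau> n * N1 \<omega>) \<partial>M)\<bar> \<le> T2 + T1 + zz"
    if fF: "f \<in> F3" for f
  proof -
    note fm[measurable] = F3_meas[OF fF]
    have intW: "integrable M (\<lambda>\<omega>. f (W \<omega>))" by (rule L3_F3[OF LW fF])
    have intW1: "integrable M (\<lambda>\<omega>. f (W1 \<omega>))" by (rule L3_F3[OF LW1 fF])
    have intW2: "integrable M (\<lambda>\<omega>. f (W2 \<omega>))" by (rule L3_F3[OF LW2 fF])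
    define Fai where "Fai = (\<lambda>i (pv::(nat \<times> (nat \<Rightarrow> real)) \<times> (nat \<times> (nat \<Rightarrow> real))).
       f (sq i * zX i (snd (fst pv) i) + sq (n - i) * zX (n - i) (snd (snd pv) (n - i + 1)) + cc i (snd (snd pv) 0)))"
    define Fbi where "Fbi = (\<lambda>i (pv::(nat \<times> (nat \<Rightarrow> real)) \<times> (nat \<times> (nat \<Rightarrow> real))).
       f (sq i * (\<tau> i * snd (fst pv) 0) + sq (n - i) * zX (n - i) (snd (snd pv) (n - i + 1)) + cc i (snd (snd pv) 0)))"
    define Fa where "Fa = (\<lambda>pv. Fai (fst (snd pv)) pv)"
    define Fb where "Fb = (\<lambda>pv. Fbi (fst (snd pv)) pv)"
    have mFa: "Fa \<in> borel_measurable (E \<Otimes>\<^sub>M E)" unfolding Fa_def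
      by (rule meas_idx[OF mfst]) (unfold Fai_def E_def, measurable)
    have mFb: "Fb \<in> borel_measurable (E \<Otimes>\<^sub>M E)" unfolding Fb_def
      by (rule meas_idx[OF mfst]) (unfold Fbi_def E_def, measurable)
    have eFa: "\<And>\<omega>. Fa (Yc CX \<omega>, V1 \<omega>) = f (W \<omega>)"
      by (simp add: Fa_def Fai_def Yc_def V1_def W_def Wf_def)
    have eFb: "\<And>\<omega>. Fb (Yc CN1 \<omega>, V1 \<omega>) = f (W1 \<omega>)"
      by (simp add: Fb_def Fbi_def Yc_def V1_def W1_def W1f_def)
    define G1 where "G1 = (\<lambda>v::nat \<times> (nat \<Rightarrow> real). ennreal ((real (fst v) / real n) powr (3/2)) * d (fst v))"
    have mG1: "G1 \<in> borel_measurable E" unfolding G1_def by (rule mG)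
    have b1: "ennreal \<bar>(\<integral>\<omega>. Fa (Yc CX \<omega>, v) \<partial>M) - (\<integral>\<omega>. Fb (Yc CN1 \<omega>, v) \<partial>M)\<bar> \<le> G1 v"
      if "v \<in> space E" for v
    proof -
      obtain i w where v: "v = (i, w)" by (cases v)
      define c0 where "c0 = sq (n - i) * zX (n - i) (w (n - i + 1)) + cc i (w 0)"
      have e1: "(\<integral>\<omega>. Fa (Yc CX \<omega>, v) \<partial>M) = (\<integral>\<omega>. f (sq i * Z i \<omega> + c0) \<partial>M)"
        by (simp add: Fa_def Fai_def Yc_def c0_def ZzX add.assoc v)
      have e2: "(\<integral>\<omega>. Fb (Yc CN1 \<omega>, v) \<partial>M) = (\<integral>\<omega>. f (sq i * (\<tau> i * N1 \<omega>) + c0) \<partial>M)"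
        by (simp add: Fb_def Fbi_def Yc_def c0_def add.assoc v)
      have "ennreal \<bar>(\<integral>\<omega>. f (sq i * Z i \<omega> + c0) \<partial>M) - (\<integral>\<omega>. f (sq i * (\<tau> i * N1 \<omega>) + c0) \<partial>M)\<bar>
          \<le> ennreal (sq i ^ 3) * zeta3 (distr M borel (Z i)) (distr M borel (\<lambda>\<omega>. \<tau> i * N1 \<omega>))"
        by (rule inner_bound[OF fF sq0]) measurable
      then show ?thesis unfolding e1 e2 by (simp add: G1_def d_def v sq3)
    qed
    have sw1: "ennreal \<bar>(\<integral>\<omega>. Fa (Yc CX \<omega>, V1 \<omega>) \<partial>M) - (\<integral>\<omega>. Fb (Yc CN1 \<omega>, V1 \<omega>) \<partial>M)\<bar>
        \<le> (\<integral>\<^sup>+\<omega>. G1 (V1 \<omega>) \<partial>M)"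
      by (rule swap_bound[OF iA iB mFa mFb _ _ mG1 b1]) (simp_all add: eFa eFb intW intW1)
    have s1: "ennreal \<bar>(\<integral>\<omega>. f (W \<omega>) \<partial>M) - (\<integral>\<omega>. f (W1 \<omega>) \<partial>M)\<bar> \<le> T1"
      using sw1 unfolding eFa eFb by (simp add: G1_def V1_def T1_def)
    define Fci where "Fci = (\<lambda>i (pv::(nat \<times> (nat \<Rightarrow> real)) \<times> (nat \<times> (nat \<Rightarrow> real))).
       f (sq i * (\<tau> i * snd (snd pv) 1) + sq (n - i) * zX (n - i) (snd (fst pv) (n - i)) + cc i (snd (snd pv) 0)))"
    define Fdi where "Fdi = (\<lambda>i (pv::(nat \<times> (nat \<Rightarrow> real)) \<times> (nat \<times> (nat \<Rightarrow> real))).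
       f (sq i * (\<tau> i * snd (snd pv) 1) + sq (n - i) * (\<tau> (n - i) * snd (fst pv) 0) + cc i (snd (snd pv) 0)))"
    define Fc where "Fc = (\<lambda>pv. Fci (fst (snd pv)) pv)"
    define Fd where "Fd = (\<lambda>pv. Fdi (fst (snd pv)) pv)"
    have mFc: "Fc \<in> borel_measurable (E \<Otimes>\<^sub>M E)" unfolding Fc_def
      by (rule meas_idx[OF mfst]) (unfold Fci_def E_def, measurable)
    have mFd: "Fd \<in> borel_measurable (E \<Otimes>\<^sub>M E)" unfolding Fd_def
      by (rule meas_idx[OF mfst]) (unfold Fdi_def E_def, measurable)
    have eFc: "\<And>\<omega>. Fc (Yc CX' \<omega>, V2 \<omega>) = f (W1 \<omega>)"
      by (simp add: Fc_def Fci_def Yc_def V2_def W1_def W1f_def)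
    have eFd: "\<And>\<omega>. Fd (Yc CN2 \<omega>, V2 \<omega>) = f (W2 \<omega>)"
      by (simp add: Fd_def Fdi_def Yc_def V2_def W2_def W2f_def)
    define G2 where "G2 = (\<lambda>v::nat \<times> (nat \<Rightarrow> real). ennreal ((real (n - fst v) / real n) powr (3/2)) * d (n - fst v))"
    have mG2: "G2 \<in> borel_measurable E" unfolding G2_def by (rule mG)
    have dN: "distr M borel N2 = distr M borel N1"
    proof -
      have "distr M borel N1 = distr M lborel N1" by (rule distr_cong) auto
      also have "\<dots> = distr M lborel N2"
        using distributed_distr_eq_density[OF N1] distributed_distr_eq_density[OF N2] by simp
      also have "\<dots> = distr M borel N2" by (rule distr_cong) auto
      finally show ?thesis by simp
    qed
    have dd: "zeta3 (distr M borel (\<lambda>\<omega>. zX j (X' j \<omega>))) (distr M borel (\<lambda>\<omega>. \<tau> j * N2 \<omega>)) = d j" for j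
    proof -
      have "distr M borel (\<lambda>\<omega>. zX j (X' j \<omega>)) = distr (distr M borel (X' j)) borel (zX j)"
        by (subst distr_distr) (auto simp: o_def)
      also have "\<dots> = distr (distr M borel (X j)) borel (zX j)" using X'_dist by simp
      also have "\<dots> = distr M borel (Z j)"
        by (subst distr_distr) (auto simp: o_def ZzX')
      finally have 1: "distr M borel (\<lambda>\<omega>. zX j (X' j \<omega>)) = distr M borel (Z j)" .
      have "distr M borel (\<lambda>\<omega>. \<tau> j * N2 \<omega>) = distr (distr M borel N2) borel (\<lambda>x. \<tau> j * x)"
        by (subst distr_distr) (auto simp: o_def)
      also have "\<dots> = distr (distr M borel N1) borel (\<lambda>x. \<tau> j * x)" using dN by simp
      also have "\<dots> = distr M borel (\<lambda>\<omega>. \<tau> j * N1 \<omega>)"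
        by (subst distr_distr) (auto simp: o_def)
      finally have 2: "distr M borel (\<lambda>\<omega>. \<tau> j * N2 \<omega>) = distr M borel (\<lambda>\<omega>. \<tau> j * N1 \<omega>)" .
      show ?thesis unfolding 1 2 d_def by simp
    qed
    have b2: "ennreal \<bar>(\<integral>\<omega>. Fc (Yc CX' \<omega>, v) \<partial>M) - (\<integral>\<omega>. Fd (Yc CN2 \<omega>, v) \<partial>M)\<bar> \<le> G2 v"
      if "v \<in> space E" for v
    proof -
      obtain i w where v: "v = (i, w)" by (cases v)
      define c1 where "c1 = sq i * (\<tau> i * w 1) + cc i (w 0)"
      have e1: "(\<integral>\<omega>. Fc (Yc CX' \<omega>, v) \<partial>M) = (\<integral>\<omega>. f (sq (n - i) * zX (n - i) (X' (n - i) \<omega>) + c1) \<partial>M)"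
        by (simp add: Fc_def Fci_def Yc_def c1_def add_ac v)
      have e2: "(\<integral>\<omega>. Fd (Yc CN2 \<omega>, v) \<partial>M) = (\<integral>\<omega>. f (sq (n - i) * (\<tau> (n - i) * N2 \<omega>) + c1) \<partial>M)"
        by (simp add: Fd_def Fdi_def Yc_def c1_def add_ac v)
      have "ennreal \<bar>(\<integral>\<omega>. f (sq (n - i) * zX (n - i) (X' (n - i) \<omega>) + c1) \<partial>M) - (\<integral>\<omega>. f (sq (n - i) * (\<tau> (n - i) * N2 \<omega>) + c1) \<partial>M)\<bar>
          \<le> ennreal (sq (n - i) ^ 3) * zeta3 (distr M borel (\<lambda>\<omega>. zX (n - i) (X' (n - i) \<omega>))) (distr M borel (\<lambda>\<omega>. \<tau> (n - i) * N2 \<omega>))"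
        by (rule inner_bound[OF fF sq0]) measurable
      then show ?thesis unfolding e1 e2 dd by (simp add: G2_def v sq3)
    qed
    have sw2: "ennreal \<bar>(\<integral>\<omega>. Fc (Yc CX' \<omega>, V2 \<omega>) \<partial>M) - (\<integral>\<omega>. Fd (Yc CN2 \<omega>, V2 \<omega>) \<partial>M)\<bar>
        \<le> (\<integral>\<^sup>+\<omega>. G2 (V2 \<omega>) \<partial>M)"
      by (rule swap_bound[OF iC iD mFc mFd _ _ mG2 b2]) (simp_all add: eFc eFd intW1 intW2)
    have s2: "ennreal \<bar>(\<integral>\<omega>. f (W1 \<omega>) \<partial>M) - (\<integral>\<omega>. f (W2 \<omega>) \<partial>M)\<bar> \<le> T2"
      using sw2 unfolding eFc eFd by (simp add: G2_def V2_def T2_def)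
    have s3: "ennreal \<bar>(\<integral>\<omega>. f (W2 \<omega>) \<partial>M) - (\<integral>\<omega>. f (\<tau> n * N1 \<omega>) \<partial>M)\<bar> \<le> zz"
    proof -
      have mZs: "Zs n \<in> borel_measurable M" using mW2 Zs2 by simp
      have "(\<integral>x. f x \<partial>distr M borel (Zs n)) = (\<integral>\<omega>. f (Zs n \<omega>) \<partial>M)"
        by (rule integral_distr[OF mZs fm])
      moreover have "(\<integral>x. f x \<partial>distr M borel (\<lambda>\<omega>. \<tau> n * N1 \<omega>)) = (\<integral>\<omega>. f (\<tau> n * N1 \<omega>) \<partial>M)"
        by (rule integral_distr) auto
      moreover have "ennreal \<bar>(\<integral>x. f x \<partial>distr M borel (Zs n)) - (\<integral>x. f x \<partial>distr M borel (\<lambda>\<omega>. \<tau> n * N1 \<omega>))\<bar> \<le> zz"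
        unfolding zz_def zeta3_def by (rule SUP_upper[OF fF])
      ultimately show ?thesis using Zs2 by simp
    qed
    have "ennreal \<bar>(\<integral>\<omega>. f (Z n \<omega>) \<partial>M) - (\<integral>\<omega>. f (\<tau> n * N1 \<omega>) \<partial>M)\<bar>
        = ennreal \<bar>(\<integral>\<omega>. f (W \<omega>) \<partial>M) - (\<integral>\<omega>. f (\<tau> n * N1 \<omega>) \<partial>M)\<bar>"
      using stepA[OF fm] by simp
    also have "\<dots> \<le> ennreal (\<bar>(\<integral>\<omega>. f (W \<omega>) \<partial>M) - (\<integral>\<omega>. f (W1 \<omega>) \<partial>M)\<bar>
        + \<bar>(\<integral>\<omega>. f (W1 \<omega>) \<partial>M) - (\<integral>\<omega>. f (W2 \<omega>) \<partial>M)\<bar>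
        + \<bar>(\<integral>\<omega>. f (W2 \<omega>) \<partial>M) - (\<integral>\<omega>. f (\<tau> n * N1 \<omega>) \<partial>M)\<bar>)"
      by (rule ennreal_leI) linarith
    also have "\<dots> = ennreal \<bar>(\<integral>\<omega>. f (W \<omega>) \<partial>M) - (\<integral>\<omega>. f (W1 \<omega>) \<partial>M)\<bar>
        + ennreal \<bar>(\<integral>\<omega>. f (W1 \<omega>) \<partial>M) - (\<integral>\<omega>. f (W2 \<omega>) \<partial>M)\<bar>
        + ennreal \<bar>(\<integral>\<omega>. f (W2 \<omega>) \<partial>M) - (\<integral>\<omega>. f (\<tau> n * N1 \<omega>) \<partial>M)\<bar>"
      by (simp add: ennreal_plus)
    also have "\<dots> \<le> T1 + T2 + zz" by (intro add_mono s1 s2 s3)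
    finally show ?thesis by (simp add: add_ac)
  qed
  have dn: "d n \<le> T2 + T1 + zz"
  proof -
    have "d n = (SUP f\<in>F3. ennreal \<bar>(\<integral>x. f x \<partial>distr M borel (Z n)) - (\<integral>x. f x \<partial>distr M borel (\<lambda>\<omega>. \<tau> n * N1 \<omega>))\<bar>)"
      by (simp add: d_def zeta3_def)
    also have "\<dots> \<le> T2 + T1 + zz"
    proof (rule SUP_least)
      fix f assume fF: "f \<in> F3"
      note fm = F3_meas[OF fF]
      have "(\<integral>x. f x \<partial>distr M borel (Z n)) = (\<integral>\<omega>. f (Z n \<omega>) \<partial>M)"
        by (rule integral_distr[OF mZ fm])
      moreover have "(\<integral>x. f x \<partial>distr M borel (\<lambda>\<omega>. \<tau> n * N1 \<omega>)) = (\<integral>\<omega>. f (\<tau> n * N1 \<omega>) \<partial>M)"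
        by (rule integral_distr[OF _ fm]) simp
      ultimately show "ennreal \<bar>(\<integral>x. f x \<partial>distr M borel (Z n)) - (\<integral>x. f x \<partial>distr M borel (\<lambda>\<omega>. \<tau> n * N1 \<omega>))\<bar> \<le> T2 + T1 + zz"
        using key[OF fF] by simp
    qed
    finally show ?thesis .
  qed
  have mA: "(\<lambda>\<omega>. ennreal ((real (n - I n \<omega>) / real n) powr (3/2)) * d (n - I n \<omega>)) \<in> borel_measurable M"
  proof -
    have "(\<lambda>i. ennreal ((real i / real n) powr (3/2)) * d i) \<in> borel_measurable (count_space UNIV)" by simp
    from measurable_compose[OF mnI this] show ?thesis .
  qed
  have mB: "(\<lambda>\<omega>. ennreal ((real (I n \<omega>) / real n) powr (3/2)) * d (I n \<omega>)) \<in> borel_measurable M"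
  proof -
    have "(\<lambda>i. ennreal ((real i / real n) powr (3/2)) * d i) \<in> borel_measurable (count_space UNIV)" by simp
    from measurable_compose[OF mI this] show ?thesis .
  qed
  have "(\<integral>\<^sup>+\<omega>. ennreal ((real (n - I n \<omega>) / real n) powr (3/2)) * d (n - I n \<omega>)
                      + ennreal ((real (I n \<omega>) / real n) powr (3/2)) * d (I n \<omega>) \<partial>M) = T2 + T1"
    unfolding T1_def T2_def by (rule nn_integral_add[OF mA mB])
  then show ?thesis using dn unfolding zz_def by simp
qed


end
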